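(* Let $f$ be a germ of a holomorphic function at the origin of $\mathbb C$, let $m\in\mathbb N$ and $k\in\mathbb N$. If for every $n\ge k$ there is $R_n\in\mathcal R_{nm}$ such that $f-R_n$ vanishes to order at least $n+m+2$ at the origin, then $f\in\mathcal R_{km}$ (i.e. $f$ is the germ of a function in $\mathcal R_{km}$).
   Context: $\mathcal R_{nm}$ is the set of rational functions $P/Q$ with $P$ a polynomial of degree at most $n$ and $Q\not\equiv0$ a polynomial of degree at most $m$. *)

theory Defs
  imports "HOL-Complex_Analysis.Complex_Analysis" "HOL-Computational_Algebra.Polynomial"
    "HOL-Library.Landau_Symbols"
begin

definition rat_fun :: "complex poly \<Rightarrow> complex poly \<Rightarrow> complex \<Rightarrow> complex" where
  "rat_fun P Q = (\<lambda>z. poly P z / poly Q z)"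

definition in_R :: "nat \<Rightarrow> nat \<Rightarrow> complex poly \<Rightarrow> complex poly \<Rightarrow> bool" where
  "in_R n m P Q \<longleftrightarrow> degree P \<le> n \<and> degree Q \<le> m \<and> Q \<noteq> 0"

text \<open>g vanishes to order at least N at the origin: g(z) = O(z^N) as z \<rightarrow> 0
  (punctured neighbourhood, so removable singularities of rational functions are harmless).\<close>
definition vanishes_to_order :: "(complex \<Rightarrow> complex) \<Rightarrow> nat \<Rightarrow> bool" where
  "vanishes_to_order g N \<longleftrightarrow> g \<in> O[at 0](\<lambda>z. z ^ N)"

end

theory Submission
  imports Defs
begin

lemma ev_poly_nz: "(q::complex poly) \<noteq> 0 \<Longrightarrow> eventually (\<lambda>z. poly q z \<noteq> 0) (at x)"
proof -
  assume "q \<noteq> 0"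
  hence "eventually (\<lambda>y. y \<notin> {x. poly q x = 0}) (at x)"
    using islimpt_finite[OF poly_roots_finite, of q x] islimpt_iff_eventually by blast
  thus ?thesis by simp
qed

lemma bigO_elim:
  assumes "(g::complex\<Rightarrow>complex) \<in> O[at 0](\<lambda>z. z^N)"
  obtains c where "c > 0" "eventually (\<lambda>z. norm (g z) \<le> c * norm z ^ N) (at 0)"
  using assms by (elim landau_o.bigE) (auto simp: norm_power)

lemma bigO_intro:
  assumes "eventually (\<lambda>z. norm (g z) \<le> c * norm z ^ N) (at (0::complex))"
  shows "(g::complex\<Rightarrow>complex) \<in> O[at 0](\<lambda>z. z^N)"
  using assms by (intro bigoI[of _ c]) (auto simp: norm_power)

lemma keyB:
  fixes h g :: "complex \<Rightarrow> complex"
  assumes "isCont h 0" "j < N" "g \<in> O[at 0](\<lambda>z. z^N)"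
    "eventually (\<lambda>z. g z = z^j * h z) (at 0)"
  shows "h 0 = 0"
proof -
  obtain c where c: "c > 0" "eventually (\<lambda>z. norm (g z) \<le> c * norm z ^ N) (at 0)"
    using assms(3) by (rule bigO_elim)
  have nz: "eventually (\<lambda>z. z \<noteq> 0) (at (0::complex))"
    by (simp add: eventually_at_filter)
  have "eventually (\<lambda>z. norm (h z) \<le> c * norm z ^ (N - j)) (at 0)"
    using c(2) assms(4) nz
  proof eventually_elim
    case (elim z)
    have "norm z ^ j * norm (h z) \<le> c * norm z ^ N"
      using elim by (simp add: norm_mult norm_power)
    also have "\<dots> = norm z ^ j * (c * norm z ^ (N - j))"
      using assms(2) by (simp add: power_add[symmetric])
    finally show ?case using elim(3) by simp
  qed
  moreover have "((\<lambda>z. c * norm z ^ (N - j)) \<longlongrightarrow> 0) (at (0::complex))"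
  proof -
    have "((\<lambda>z. c * norm z ^ (N - j)) \<longlongrightarrow> c * norm (0::complex) ^ (N - j)) (at (0::complex))"
      by (intro tendsto_intros)
    thus ?thesis using assms(2) by (simp add: power_0_left)
  qed
  ultimately have "(h \<longlongrightarrow> 0) (at 0)" by (rule Lim_null_comparison)
  moreover have "(h \<longlongrightarrow> h 0) (at 0)" using assms(1) isCont_def by blast
  ultimately show ?thesis using tendsto_unique[OF at_neq_bot] by blast
qed

lemma bigO_mono_pow:
  assumes "(g::complex\<Rightarrow>complex) \<in> O[at 0](\<lambda>z. z^N)" "M \<le> N"
  shows "g \<in> O[at 0](\<lambda>z. z^M)"
proof -
  obtain c where c: "c > 0" "eventually (\<lambda>z. norm (g z) \<le> c * norm z ^ N) (at 0)"
    using assms(1) by (rule bigO_elim)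
  have "eventually (\<lambda>z::complex. norm z < 1) (at 0)"
    unfolding eventually_at by (intro exI[of _ 1]) (auto simp: dist_norm)
  with c(2) have "eventually (\<lambda>z. norm (g z) \<le> c * norm z ^ M) (at 0)"
  proof eventually_elim
    case (elim z)
    have "norm z ^ N \<le> norm z ^ M" using elim assms(2) by (intro power_decreasing) auto
    thus ?case using elim c(1) by (meson mult_left_mono less_imp_le order_trans)
  qed
  thus ?thesis by (rule bigO_intro)
qed

lemma bigO_mult_cont:
  assumes "isCont q 0" "(g::complex\<Rightarrow>complex) \<in> O[at 0](\<lambda>z. z^N)"
  shows "(\<lambda>z. g z * q z) \<in> O[at 0](\<lambda>z. z^N)"
proof -
  obtain c where c: "c > 0" "eventually (\<lambda>z. norm (g z) \<le> c * norm z ^ N) (at 0)"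
    using assms(2) by (rule bigO_elim)
  have "(q \<longlongrightarrow> q 0) (at 0)" using assms(1) isCont_def by blast
  hence "((\<lambda>z. norm (q z)) \<longlongrightarrow> norm (q 0)) (at 0)" by (rule tendsto_norm)
  hence "eventually (\<lambda>z. norm (q z) < norm (q 0) + 1) (at 0)"
    by (rule order_tendstoD) simp
  with c(2) have "eventually (\<lambda>z. norm (g z * q z) \<le> (c * (norm (q 0) + 1)) * norm z ^ N) (at 0)"
  proof eventually_elim
    case (elim z)
    have "norm (g z) * norm (q z) \<le> (c * norm z ^ N) * (norm (q 0) + 1)"
      using elim c(1) by (intro mult_mono) auto
    thus ?case by (simp add: norm_mult mult_ac)
  qed
  thus ?thesis by (rule bigO_intro)
qed

lemma bigO_diff:
  assumes "(g::complex\<Rightarrow>complex) \<in> O[at 0](\<lambda>z. z^N)" "h \<in> O[at 0](\<lambda>z. z^N)"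
  shows "(\<lambda>z. g z - h z) \<in> O[at 0](\<lambda>z. z^N)"
proof -
  obtain c where c: "c > 0" "eventually (\<lambda>z. norm (g z) \<le> c * norm z ^ N) (at 0)"
    using assms(1) by (rule bigO_elim)
  obtain d where d: "d > 0" "eventually (\<lambda>z. norm (h z) \<le> d * norm z ^ N) (at 0)"
    using assms(2) by (rule bigO_elim)
  from c(2) d(2) have "eventually (\<lambda>z. norm (g z - h z) \<le> (c + d) * norm z ^ N) (at 0)"
  proof eventually_elim
    case (elim z)
    have "norm (g z - h z) \<le> norm (g z) + norm (h z)" by (rule norm_triangle_ineq4)
    thus ?case using elim by (simp add: distrib_right)
  qed
  thus ?thesis by (rule bigO_intro)
qed

lemma bigO_cong:
  assumes "(g::complex\<Rightarrow>complex) \<in> O[at 0](\<lambda>z. z^N)" "eventually (\<lambda>z. g z = h z) (at 0)"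
  shows "h \<in> O[at 0](\<lambda>z. z^N)"
proof -
  obtain c where c: "c > 0" "eventually (\<lambda>z. norm (g z) \<le> c * norm z ^ N) (at 0)"
    using assms(1) by (rule bigO_elim)
  from c(2) assms(2) have "eventually (\<lambda>z. norm (h z) \<le> c * norm z ^ N) (at 0)"
    by eventually_elim simp
  thus ?thesis by (rule bigO_intro)
qed

lemma poly_bigO_zero:
  assumes "degree (p::complex poly) < N" "poly p \<in> O[at 0](\<lambda>z. z^N)"
  shows "p = 0"
proof (rule ccontr)
  assume p: "p \<noteq> 0"
  then obtain q where q: "p = [:- 0, 1:] ^ order 0 p * q" "\<not> [:- 0, 1:] dvd q"
    using order_decomp by blast
  have "poly q 0 \<noteq> 0" using q(2) poly_eq_0_iff_dvd by blast
  moreover have "poly q 0 = 0"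
  proof (rule keyB[of "poly q" "order 0 p" N "poly p"])
    show "isCont (poly q) 0" by simp
    show "order 0 p < N" using order_degree[OF p, of 0] assms(1) by simp
    show "poly p \<in> O[at 0](\<lambda>z. z^N)" by fact
    show "eventually (\<lambda>z. poly p z = z ^ order 0 p * poly q z) (at 0)"
      by (rule always_eventually) (subst q(1), simp add: poly_power)
  qed
  ultimately show False by simp
qed


theorem proposition3p5:
  fixes f :: "complex \<Rightarrow> complex" and r :: real and m k :: nat
  assumes "r > 0" and "f holomorphic_on ball 0 r"
    and "\<forall>n\<ge>k. \<exists>P Q. in_R n m P Q \<and>
            vanishes_to_order (\<lambda>z. f z - rat_fun P Q z) (n + m + 2)"
  shows "\<exists>P Q. in_R k m P Q \<and> (\<forall>\<^sub>F z in at 0. f z = rat_fun P Q z)"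
proof -
  from assms(3) obtain P Q where PQ: "\<And>n. n \<ge> k \<Longrightarrow> in_R n m (P n) (Q n) \<and>
      vanishes_to_order (\<lambda>z. f z - rat_fun (P n) (Q n) z) (n + m + 2)"
    by metis
  have deg: "degree (P n) \<le> n" "degree (Q n) \<le> m" "Q n \<noteq> 0" if "n \<ge> k" for n
    using PQ[OF that] by (auto simp: in_R_def)
  have van: "(\<lambda>z. f z - poly (P n) z / poly (Q n) z) \<in> O[at 0](\<lambda>z. z ^ (n + m + 2))"
    if "n \<ge> k" for n
    using PQ[OF that] by (auto simp: vanishes_to_order_def rat_fun_def)
  have stepeq: "P n * Q (Suc n) = P (Suc n) * Q n" if n: "n \<ge> k" for n
  proof -
    define D where "D = P n * Q (Suc n) - P (Suc n) * Q n"
    have "degree D \<le> n + 1 + m"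
    proof -
      have "degree (P n * Q (Suc n)) \<le> n + 1 + m"
        using degree_mult_le[of "P n" "Q (Suc n)"] deg[OF n] deg[of "Suc n"] n by simp
      moreover have "degree (P (Suc n) * Q n) \<le> n + 1 + m"
        using degree_mult_le[of "P (Suc n)" "Q n"] deg[OF n] deg[of "Suc n"] n by simp
      ultimately show ?thesis unfolding D_def by (meson degree_diff_le)
    qed
    hence d1: "degree D < n + m + 2" by simp
    have a: "(\<lambda>z. f z - poly (P (Suc n)) z / poly (Q (Suc n)) z) \<in> O[at 0](\<lambda>z. z ^ (n + m + 2))"
      by (rule bigO_mono_pow[OF van[of "Suc n"]]) (use n in auto)
    have b: "(\<lambda>z. (f z - poly (P (Suc n)) z / poly (Q (Suc n)) z) - (f z - poly (P n) z / poly (Q n) z))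
        \<in> O[at 0](\<lambda>z. z ^ (n + m + 2))"
      by (rule bigO_diff[OF a van[OF n]])
    have c: "(\<lambda>z. ((f z - poly (P (Suc n)) z / poly (Q (Suc n)) z) - (f z - poly (P n) z / poly (Q n) z))
        * poly (Q n * Q (Suc n)) z) \<in> O[at 0](\<lambda>z. z ^ (n + m + 2))"
      by (rule bigO_mult_cont[OF _ b]) simp
    have "eventually (\<lambda>z. poly (Q n) z \<noteq> 0 \<and> poly (Q (Suc n)) z \<noteq> 0) (at 0)"
      using ev_poly_nz[OF deg(3)[OF n]] ev_poly_nz[OF deg(3)[of "Suc n"]] n
      by (simp add: eventually_conj_iff)
    hence "eventually (\<lambda>z. ((f z - poly (P (Suc n)) z / poly (Q (Suc n)) z) - (f z - poly (P n) z / poly (Q n) z))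
        * poly (Q n * Q (Suc n)) z = poly D z) (at 0)"
      by eventually_elim (simp add: D_def field_simps)
    from bigO_cong[OF c this] have "poly D \<in> O[at 0](\<lambda>z. z ^ (n + m + 2))" .
    from poly_bigO_zero[OF d1 this] show ?thesis by (simp add: D_def)
  qed
  have all: "P k * Q n = P n * Q k" if "n \<ge> k" for n
    using that
  proof (induction n rule: dec_induct)
    case base then show ?case by simp
  next
    case (step n)
    have "Q n * (P k * Q (Suc n)) = Q n * (P (Suc n) * Q k)"
    proof -
      have "Q n * (P k * Q (Suc n)) = (P k * Q n) * Q (Suc n)" by (simp add: mult_ac)
      also have "\<dots> = Q k * (P n * Q (Suc n))" using step.IH by (simp add: mult_ac)
      also have "\<dots> = Q k * (P (Suc n) * Q n)" using stepeq[OF step.hyps(1)] by simp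
      finally show ?thesis by (simp add: mult_ac)
    qed
    thus ?case using deg(3)[OF step.hyps(1)] by simp
  qed
  define G where "G z = f z * poly (Q k) z - poly (P k) z" for z
  have Ghol: "G holomorphic_on ball 0 r"
    unfolding G_def by (intro holomorphic_intros assms(2))
  have Gbig: "G \<in> O[at 0](\<lambda>z. z ^ N)" for N
  proof -
    define n where "n = k + N"
    have n: "n \<ge> k" by (simp add: n_def)
    have "(\<lambda>z. (f z - poly (P n) z / poly (Q n) z) * poly (Q k) z) \<in> O[at 0](\<lambda>z. z ^ (n + m + 2))"
      by (rule bigO_mult_cont[OF _ van[OF n]]) simp
    moreover have "eventually (\<lambda>z. (f z - poly (P n) z / poly (Q n) z) * poly (Q k) z = G z) (at 0)"
    proof -
      have "eventually (\<lambda>z. poly (Q n) z \<noteq> 0) (at 0)" using ev_poly_nz[OF deg(3)[OF n]] .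
      thus ?thesis
      proof eventually_elim
        case (elim z)
        have "poly (P k) z * poly (Q n) z = poly (P n) z * poly (Q k) z"
          using arg_cong[OF all[OF n], of "\<lambda>p. poly p z"] by simp
        thus ?case using elim unfolding G_def by (simp add: field_simps)
      qed
    qed
    ultimately have "G \<in> O[at 0](\<lambda>z. z ^ (n + m + 2))" by (rule bigO_cong)
    thus ?thesis by (rule bigO_mono_pow) (simp add: n_def)
  qed
  have Gcont: "isCont G 0"
    using holomorphic_on_imp_continuous_on[OF Ghol] assms(1)
    by (simp add: continuous_on_eq_continuous_at)
  have G0: "G 0 = 0"
    using keyB[OF Gcont _ Gbig[of 1], of 0] by simp
  have Gz: "eventually (\<lambda>z. G z = 0) (at 0)"
  proof (cases "G constant_on ball 0 r")
    case True
    then obtain c where "\<And>z. z \<in> ball 0 r \<Longrightarrow> G z = c" by (auto simp: constant_on_def)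
    hence "\<And>z. z \<in> ball 0 r \<Longrightarrow> G z = 0" using G0 assms(1) by (metis centre_in_ball)
    moreover have "eventually (\<lambda>z. z \<in> ball 0 r) (at (0::complex))"
      using assms(1) by (intro eventually_at_in_open') auto
    ultimately show ?thesis by (auto elim: eventually_mono)
  next
    case False
    obtain h e n where he: "0 < n" "0 < e" "ball (0::complex) e \<subseteq> ball 0 r"
            "h holomorphic_on ball 0 e"
            "\<And>w. w \<in> ball 0 e \<Longrightarrow> G w = (w - 0)^n * h w"
            "\<And>w. w \<in> ball 0 e \<Longrightarrow> h w \<noteq> 0"
    proof -
      have z0: "0 \<in> ball (0::complex) r" using assms(1) by simp
      show thesis
        apply (rule holomorphic_factor_zero_nonconstant[OF Ghol open_ball connected_ball z0 G0 False])
        apply (rule that)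
             apply assumption+
        done
    qed
    have "isCont h 0"
      using holomorphic_on_imp_continuous_on[OF he(4)] he(2)
      by (simp add: continuous_on_eq_continuous_at)
    moreover have "eventually (\<lambda>z. z \<in> ball 0 e) (at (0::complex))"
      using he(2) by (intro eventually_at_in_open') auto
    hence "eventually (\<lambda>z. G z = z ^ n * h z) (at 0)"
      by (auto elim: eventually_mono simp: he(5))
    ultimately have "h 0 = 0" using keyB[of h n "n+1" G, OF _ _ Gbig[of "n+1"]] by simp
    with he(6)[of 0] he(2) show ?thesis by simp
  qed
  have "eventually (\<lambda>z. f z = rat_fun (P k) (Q k) z) (at 0)"
    using Gz ev_poly_nz[OF deg(3)[OF order.refl], of 0]
  proof eventually_elim
    case (elim z)
    thus ?case by (simp add: G_def rat_fun_def field_simps)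
  qed
  moreover have "in_R k m (P k) (Q k)" using PQ[of k] by simp
  ultimately show ?thesis by blast
qed

end
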